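(* Let $\mathcal{M}=(K,G,A,(\gamma')_{\gamma\in\Gamma},(\delta')_{\delta\in\Delta})$ be a model of $T$ and $\kappa>|\Gamma\Delta|$ an infinite cardinal. Let $K'$ be a real closed subfield of $K$ with $|K'|<\kappa$, $G'$ a pure subgroup of $G$ containing $\Gamma'$ with $G'\subseteq K'(i)$, and $A'$ a pure subgroup of $A$ containing $\Delta'$ with $A'\subseteq K'$, such that $K'(i)$ and $\mathbb{Q}(GA)$ are free over $\mathbb{Q}(G'A')$. Then $G\cap K'(i)=G'$ and $A\cap K'=A'$. Moreover, under these hypotheses, the following are equivalent: (a) for every $k\in(K')^{>0}$ there is $a\in A'$ with $a\le k<a\varepsilon'$; (b) $K'$ is closed under $\lambda$, i.e. $\lambda((K')^{>0})\subseteq K'$.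
   Context: $T$ is the theory of structures $(K,G,A,(\gamma')_{\gamma\in\Gamma},(\delta')_{\delta\in\Delta})$ (for a fixed finite rank $\Gamma\le\mathbb{S}^1$ and $\Delta=\varepsilon^{\mathbb{Z}}$, real $\varepsilon>1$) with $K$ real closed, $A\le K^{>0}$ having $\varepsilon'$ as least element $>1$, $G$ a dense subgroup of $\mathbb{S}^1(K)$, for all $k\in K^{>0}$ some $a\in A$ with $a\le k<a\varepsilon'$, $\gamma\mapsto\gamma'$ and $\delta\mapsto\delta'$ homomorphisms into $G$ and $A$, the orientation axioms, the Mann axioms (every nondegenerate solution in $GA\subseteq K(i)$ of $\sum a_ix_i=1$, $a_i\in\mathbb{Q}^\times$, is the image $(\gamma_1'\delta_1',\dots)$ of a nondegenerate solution in $\Gamma\Delta$), and torsion of $G$ equal to the image of torsion of $\Gamma$. $\Gamma'$, $\Delta'$ denote the images of $\Gamma,\Delta$. $K(i)$ is identified with $K^2$; $A$ is viewed inside $K(i)$. A subgroup $B$ of $A$ is pure if $B\cap A^{[m]}=B^{[m]}$ for all $m\ge1$. For subfields $k\subseteq E,F$ of a common field, $E$ and $F$ are free over $k$ if every subset of $E$ algebraically independent over $k$ is algebraically independent over $F$. $\lambda:K^{>0}\to A$ sends $k$ to the unique $a\in A$ with $a\le k<a\varepsilon'$. *)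

theory Defs
  imports Complex_Main "HOL-Computational_Algebra.Polynomial"
begin

section \<open>The field K(i), represented as pairs over an ordered field K\<close>

datatype 'a cx = Cx (cRe: 'a) (cIm: 'a)

instantiation cx :: (linordered_field) field
begin
definition "0 = Cx 0 0"
definition "1 = Cx 1 0"
definition "x + y = Cx (cRe x + cRe y) (cIm x + cIm y)"
definition "x - y = Cx (cRe x - cRe y) (cIm x - cIm y)"
definition "- x = Cx (- cRe x) (- cIm x)"
definition "x * y = Cx (cRe x * cRe y - cIm x * cIm y) (cRe x * cIm y + cIm x * cRe y)"
definition "inverse x = Cx (cRe x / (cRe x * cRe x + cIm x * cIm x))
                            (- cIm x / (cRe x * cRe x + cIm x * cIm x))"
definition "x div (y::'a cx) = x * inverse y"
instance
proof
  fix a b c :: "'a cx"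
  show "a * b * c = a * (b * c)"
    by (cases a; cases b; cases c) (simp add: times_cx_def algebra_simps)
  show "a * b = b * a"
    by (cases a; cases b) (simp add: times_cx_def algebra_simps)
  show "1 * a = a"
    by (cases a) (simp add: times_cx_def one_cx_def)
  show "(a + b) * c = a * c + b * c"
    by (cases a; cases b; cases c) (simp add: times_cx_def plus_cx_def algebra_simps)
  show "a + b + c = a + (b + c)"
    by (simp add: plus_cx_def algebra_simps)
  show "a + b = b + a"
    by (simp add: plus_cx_def algebra_simps)
  show "0 + a = a"
    by (cases a) (simp add: plus_cx_def zero_cx_def)
  show "- a + a = 0"
    by (simp add: plus_cx_def uminus_cx_def zero_cx_def)
  show "a - b = a + - b"
    by (simp add: plus_cx_def uminus_cx_def minus_cx_def)
  show "(0::'a cx) \<noteq> 1"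
    by (simp add: zero_cx_def one_cx_def)
  show "a div b = a * inverse b"
    by (simp add: divide_cx_def)
  show "inverse (0::'a cx) = 0"
    by (simp add: inverse_cx_def zero_cx_def)
  assume "a \<noteq> 0"
  then obtain x y where a: "a = Cx x y" and nz: "x * x + y * y \<noteq> 0"
    by (cases a) (auto simp: zero_cx_def sum_squares_eq_zero_iff)
  define s where "s = x * x + y * y"
  have s: "s \<noteq> 0" using nz by (simp add: s_def)
  have re: "x / s * x - (- y / s) * y = 1"
    using s by (simp add: s_def divide_simps)
  have im: "x / s * y + (- y / s) * x = 0"
    by (simp add: divide_simps algebra_simps)
  show "inverse a * a = 1"
    using re im by (simp add: a inverse_cx_def times_cx_def one_cx_def s_def[symmetric])
qed
end

lemma of_nat_cx: "(of_nat n :: 'a::linordered_field cx) = Cx (of_nat n) 0"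
  by (induction n) (simp_all add: zero_cx_def one_cx_def plus_cx_def)

instance cx :: (linordered_field) field_char_0
  by standard (auto simp: inj_on_def of_nat_cx)

definition of_k :: "'a::linordered_field \<Rightarrow> 'a cx" where
  "of_k a = Cx a 0"

definition circle :: "'a::linordered_field cx set" where
  "circle = {z. cRe z * cRe z + cIm z * cIm z = 1}"

definition adjoin_i :: "'a::linordered_field set \<Rightarrow> 'a cx set" where
  "adjoin_i F = {Cx a b | a b. a \<in> F \<and> b \<in> F}"

definition is_subfield :: "'a::field set \<Rightarrow> bool" where
  "is_subfield F \<longleftrightarrow> 0 \<in> F \<and> 1 \<in> F \<and> (\<forall>x\<in>F. \<forall>y\<in>F. x + y \<in> F \<and> x * y \<in> F)
     \<and> (\<forall>x\<in>F. - x \<in> F) \<and> (\<forall>x\<in>F. x \<noteq> 0 \<longrightarrow> inverse x \<in> F)"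

text \<open>The subfield generated by X (over the prime field Q, as char 0).\<close>
definition gen_subfield :: "'a::field set \<Rightarrow> 'a set" where
  "gen_subfield X = \<Inter> {F. is_subfield F \<and> X \<subseteq> F}"

definition real_closed_subfield :: "'a::linordered_field set \<Rightarrow> bool" where
  "real_closed_subfield F \<longleftrightarrow> is_subfield F
     \<and> (\<forall>x\<in>F. 0 < x \<longrightarrow> (\<exists>y\<in>F. y * y = x))
     \<and> (\<forall>p. (\<forall>i. coeff p i \<in> F) \<and> odd (degree p) \<longrightarrow> (\<exists>x\<in>F. poly p x = 0))"

text \<open>A polynomial in n variables is a finitely supported coefficient function on
  exponent vectors (lists of length n).\<close>
definition alg_indep_over :: "'a::field set \<Rightarrow> 'a set \<Rightarrow> bool" where
  "alg_indep_over F S \<longleftrightarrow>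
    (\<forall>(xs::'a list) (c::nat list \<Rightarrow> 'a).
       distinct xs \<and> set xs \<subseteq> S \<and> finite {e. c e \<noteq> 0}
       \<and> (\<forall>e. c e \<noteq> 0 \<longrightarrow> length e = length xs) \<and> (\<forall>e. c e \<in> F)
       \<and> (\<Sum>e\<in>{e. c e \<noteq> 0}. c e * (\<Prod>i<length xs. (xs ! i) ^ (e ! i))) = 0
       \<longrightarrow> (\<forall>e. c e = 0))"

definition free_over :: "'a::field set \<Rightarrow> 'a set \<Rightarrow> 'a set \<Rightarrow> bool" where
  "free_over k E F \<longleftrightarrow> (\<forall>S. S \<subseteq> E \<and> alg_indep_over k S \<longrightarrow> alg_indep_over F S)"

definition mult_subgroup :: "'a::field set \<Rightarrow> bool" where
  "mult_subgroup H \<longleftrightarrow> 1 \<in> H \<and> (\<forall>x\<in>H. x \<noteq> 0 \<and> inverse x \<in> H)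
     \<and> (\<forall>x\<in>H. \<forall>y\<in>H. x * y \<in> H)"

definition gen_subgroup :: "'a::field set \<Rightarrow> 'a set" where
  "gen_subgroup B = \<Inter> {H. mult_subgroup H \<and> B \<subseteq> H}"

definition pows :: "nat \<Rightarrow> 'a::field set \<Rightarrow> 'a set" where
  "pows m X = (\<lambda>x. x ^ m) ` X"

definition pure_subgroup :: "'a::field set \<Rightarrow> 'a set \<Rightarrow> bool" where
  "pure_subgroup H G \<longleftrightarrow> mult_subgroup H \<and> H \<subseteq> G
     \<and> (\<forall>m\<ge>1. H \<inter> pows m G = pows m H)"

definition torsion :: "'a::field set \<Rightarrow> 'a set" where
  "torsion X = {x \<in> X. \<exists>n\<ge>1. x ^ n = 1}"

definition finite_rank :: "'a::field set \<Rightarrow> bool" where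
  "finite_rank \<Gamma> \<longleftrightarrow> (\<exists>B. finite B \<and> B \<subseteq> \<Gamma> \<and> (\<forall>g\<in>\<Gamma>. \<exists>n\<ge>1. g ^ n \<in> gen_subgroup B))"

definition nondeg_solution :: "nat \<Rightarrow> (nat \<Rightarrow> rat) \<Rightarrow> (nat \<Rightarrow> 'a::field_char_0) \<Rightarrow> bool" where
  "nondeg_solution n a x \<longleftrightarrow> (\<Sum>i<n. of_rat (a i) * x i) = 1
     \<and> (\<forall>I. I \<subseteq> {..<n} \<and> I \<noteq> {} \<longrightarrow> (\<Sum>i\<in>I. of_rat (a i) * x i) \<noteq> 0)"

definition orient_C :: "complex \<Rightarrow> complex \<Rightarrow> complex \<Rightarrow> bool" where
  "orient_C z1 z2 z3 \<longleftrightarrow>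
     0 < (Re z2 - Re z1) * (Im z3 - Im z1) - (Im z2 - Im z1) * (Re z3 - Re z1)"

definition orient_K :: "'a::linordered_field cx \<Rightarrow> 'a cx \<Rightarrow> 'a cx \<Rightarrow> bool" where
  "orient_K z1 z2 z3 \<longleftrightarrow>
     0 < (cRe z2 - cRe z1) * (cIm z3 - cIm z1) - (cIm z2 - cIm z1) * (cRe z3 - cRe z1)"

definition Delta :: "real \<Rightarrow> real set" where
  "Delta \<epsilon> = range (\<lambda>z::int. \<epsilon> powi z)"

definition model_T ::
  "complex set \<Rightarrow> real \<Rightarrow> 'a::linordered_field cx set \<Rightarrow> 'a set
     \<Rightarrow> (complex \<Rightarrow> 'a cx) \<Rightarrow> (real \<Rightarrow> 'a) \<Rightarrow> bool" where
  "model_T \<Gamma> \<epsilon> G A gp dp \<longleftrightarrow>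
     \<comment> \<open>parameters: Gamma a finite rank subgroup of S^1, epsilon > 1\<close>
     mult_subgroup \<Gamma> \<and> \<Gamma> \<subseteq> {z. cmod z = 1} \<and> finite_rank \<Gamma> \<and> 1 < \<epsilon>
     \<comment> \<open>K real closed\<close>
     \<and> real_closed_subfield (UNIV :: 'a set)
     \<comment> \<open>A subgroup of K^{>0} with least element > 1 equal to epsilon'\<close>
     \<and> mult_subgroup A \<and> A \<subseteq> {x. 0 < x}
     \<and> dp \<epsilon> \<in> A \<and> 1 < dp \<epsilon> \<and> (\<forall>a\<in>A. 1 < a \<longrightarrow> dp \<epsilon> \<le> a)
     \<comment> \<open>G a dense subgroup of S^1(K)\<close>
     \<and> mult_subgroup G \<and> G \<subseteq> circle
     \<and> (\<forall>z\<in>circle. \<forall>e>0. \<exists>g\<in>G. \<bar>cRe g - cRe z\<bar> < e \<and> \<bar>cIm g - cIm z\<bar> < e)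
     \<comment> \<open>A is discrete with steps epsilon'\<close>
     \<and> (\<forall>k>0. \<exists>a\<in>A. a \<le> k \<and> k < a * dp \<epsilon>)
     \<comment> \<open>homomorphisms\<close>
     \<and> (\<forall>g\<in>\<Gamma>. gp g \<in> G) \<and> (\<forall>g\<in>\<Gamma>. \<forall>h\<in>\<Gamma>. gp (g * h) = gp g * gp h)
     \<and> (\<forall>d\<in>Delta \<epsilon>. dp d \<in> A) \<and> (\<forall>d\<in>Delta \<epsilon>. \<forall>d'\<in>Delta \<epsilon>. dp (d * d') = dp d * dp d')
     \<comment> \<open>orientation axioms\<close>
     \<and> (\<forall>g1\<in>\<Gamma>. \<forall>g2\<in>\<Gamma>. \<forall>g3\<in>\<Gamma>. orient_C g1 g2 g3 \<longleftrightarrow> orient_K (gp g1) (gp g2) (gp g3))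
     \<comment> \<open>Mann axioms\<close>
     \<and> (\<forall>n a x. (\<forall>i<n. a i \<noteq> 0 \<and> x i \<in> {g * of_k b | g b. g \<in> G \<and> b \<in> A})
            \<and> nondeg_solution n a x \<longrightarrow>
          (\<exists>g d. (\<forall>i<n. g i \<in> \<Gamma> \<and> d i \<in> Delta \<epsilon>)
             \<and> nondeg_solution n a (\<lambda>i. g i * complex_of_real (d i))
             \<and> (\<forall>i<n. x i = gp (g i) * of_k (dp (d i)))))
     \<comment> \<open>torsion\<close>
     \<and> torsion G = gp ` torsion \<Gamma>"

definition lam :: "'a::linordered_field set \<Rightarrow> 'a \<Rightarrow> 'a \<Rightarrow> 'a" where
  "lam A e k = (THE a. a \<in> A \<and> a \<le> k \<and> k < a * e)"

end

theory Submission
  imports Defs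
begin

inductive_set span :: "'a::field_char_0 set \<Rightarrow> 'a set" for H where
  span0: "0 \<in> span H"
| spanS: "h \<in> H \<Longrightarrow> s \<in> span H \<Longrightarrow> of_rat q * h + s \<in> span H"

lemma span_add: "s \<in> span H \<Longrightarrow> s' \<in> span H \<Longrightarrow> s + s' \<in> span H"
  by (induction s rule: span.induct) (auto simp: add.assoc intro: span.intros)

lemma span_smult: "s \<in> span H \<Longrightarrow> of_rat c * s \<in> span H"
proof (induction s rule: span.induct)
  case span0 then show ?case by (simp add: span.intros)
next
  case (spanS h s q)
  have "of_rat c * (of_rat q * h + s) = of_rat (c*q) * h + of_rat c * s"
    by (simp add: algebra_simps of_rat_mult)
  then show ?case using spanS by (simp add: span.intros)
qed

lemma span_hmult: assumes "mult_subgroup H" "g \<in> H" shows "s \<in> span H \<Longrightarrow> g * s \<in> span H"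
proof (induction s rule: span.induct)
  case span0 then show ?case by (simp add: span.intros)
next
  case (spanS h s q)
  have "g * (of_rat q * h + s) = of_rat q * (g * h) + g * s"
    by (simp add: algebra_simps)
  moreover have "g * h \<in> H" using spanS assms by (simp add: mult_subgroup_def)
  ultimately show ?case using spanS by (simp add: span.intros)
qed

lemma span_mult: assumes "mult_subgroup H" "s' \<in> span H" shows "s \<in> span H \<Longrightarrow> s * s' \<in> span H"
proof (induction s rule: span.induct)
  case span0 then show ?case by (simp add: span.intros)
next
  case (spanS h s q)
  have "(of_rat q * h + s) * s' = of_rat q * (h * s') + s * s'"
    by (simp add: algebra_simps)
  then show ?case using spanS span_hmult[OF assms(1)] span_smult span_add assms by metis
qed

lemma span_H: "h \<in> H \<Longrightarrow> h \<in> span H"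
  using spanS[of h H 0 1] by (simp add: span0)

lemma span_one: "mult_subgroup H \<Longrightarrow> 1 \<in> span H"
  by (simp add: mult_subgroup_def span_H)

lemma span_neg: "s \<in> span H \<Longrightarrow> - s \<in> span H"
  using span_smult[of s H "-1"] by simp

lemma span_prod: assumes "mult_subgroup H" shows "finite N \<Longrightarrow> (\<forall>n\<in>N. d n \<in> span H) \<Longrightarrow> prod d N \<in> span H"
  by (induction N rule: finite_induct) (auto simp: span_one span_mult assms)

lemma span_repr: "s \<in> span H \<Longrightarrow> \<exists>S f. finite S \<and> S \<subseteq> H \<and> s = (\<Sum>h\<in>S. of_rat (f h) * h)"
proof (induction s rule: span.induct)
  case span0 then show ?case by (intro exI[of _ "{}"]) auto
next
  case (spanS h s q)
  then obtain S f where S: "finite S" "S \<subseteq> H" "s = (\<Sum>h\<in>S. of_rat (f h) * h)" by blast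
  show ?case
  proof (cases "h \<in> S")
    case True
    define f' where "f' = f(h := f h + q)"
    have "(\<Sum>h\<in>S. of_rat (f' h) * h) = of_rat (f' h) * h + (\<Sum>h'\<in>S-{h}. of_rat (f' h') * h')"
      using True S by (simp add: sum.remove)
    also have "(\<Sum>h'\<in>S-{h}. of_rat (f' h') * h') = (\<Sum>h'\<in>S-{h}. of_rat (f h') * h')"
      by (rule sum.cong) (auto simp: f'_def)
    also have "s = of_rat (f h) * h + (\<Sum>h'\<in>S-{h}. of_rat (f h') * h')"
      using True S by (simp add: sum.remove)
    ultimately have "of_rat q * h + s = (\<Sum>h\<in>S. of_rat (f' h) * h)"
      by (simp add: f'_def of_rat_add algebra_simps)
    then show ?thesis using S by blast
  next
    case False
    define f' where "f' = f(h := q)"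
    have "(\<Sum>h\<in>insert h S. of_rat (f' h) * h) = of_rat q * h + (\<Sum>h'\<in>S. of_rat (f' h') * h')"
      using False S by (simp add: f'_def)
    also have "(\<Sum>h'\<in>S. of_rat (f' h') * h') = s"
      using False S by (auto simp: f'_def intro!: sum.cong)
    finally show ?thesis using S spanS(1) by (intro exI[of _ "insert h S"] exI[of _ f']) auto
  qed
qed

definition frac :: "'a::field_char_0 set \<Rightarrow> 'a set" where
  "frac H = {x. \<exists>p q. x = p / q \<and> p \<in> span H \<and> q \<in> span H \<and> q \<noteq> 0}"

lemma fracI: "p \<in> span H \<Longrightarrow> q \<in> span H \<Longrightarrow> q \<noteq> 0 \<Longrightarrow> x = p / q \<Longrightarrow> x \<in> frac H"
  unfolding frac_def by blast

lemma fracE: "x \<in> frac H \<Longrightarrow> (\<And>p q. p \<in> span H \<Longrightarrow> q \<in> span H \<Longrightarrow> q \<noteq> 0 \<Longrightarrow> x = p / q \<Longrightarrow> P) \<Longrightarrow> P"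
  unfolding frac_def by blast

lemma frac_subfield: assumes "mult_subgroup H" shows "is_subfield (frac H)"
proof -
  have one: "1 \<in> span H" using span_one assms .
  have z: "0 \<in> frac H" by (rule fracI[OF span0 one]) auto
  have o: "1 \<in> frac H" by (rule fracI[OF one one]) auto
  have add: "x + y \<in> frac H" if xf: "x \<in> frac H" "y \<in> frac H" for x y
  proof -
    obtain p q where a: "p \<in> span H" "q \<in> span H" "q \<noteq> 0" "x = p/q" by (rule fracE[OF xf(1)])
    obtain p' q' where b: "p' \<in> span H" "q' \<in> span H" "q' \<noteq> 0" "y = p'/q'" by (rule fracE[OF xf(2)])
    have e: "x + y = (p*q' + p'*q)/(q*q')" using a b
      by (simp add: add_frac_eq mult.commute)
    show ?thesis
      by (rule fracI[OF span_add[OF span_mult[OF assms b(2) a(1)] span_mult[OF assms a(2) b(1)]]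
             span_mult[OF assms b(2) a(2)] _ e]) (use a b in simp)
  qed
  have mul: "x * y \<in> frac H" if xf: "x \<in> frac H" "y \<in> frac H" for x y
  proof -
    obtain p q where a: "p \<in> span H" "q \<in> span H" "q \<noteq> 0" "x = p/q" by (rule fracE[OF xf(1)])
    obtain p' q' where b: "p' \<in> span H" "q' \<in> span H" "q' \<noteq> 0" "y = p'/q'" by (rule fracE[OF xf(2)])
    have e: "x * y = (p*p')/(q*q')" using a b by simp
    show ?thesis
      by (rule fracI[OF span_mult[OF assms b(1) a(1)] span_mult[OF assms b(2) a(2)] _ e]) (use a b in simp)
  qed
  have neg: "- x \<in> frac H" if xf: "x \<in> frac H" for x
  proof -
    obtain p q where a: "p \<in> span H" "q \<in> span H" "q \<noteq> 0" "x = p/q" by (rule fracE[OF xf(1)])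
    show ?thesis by (rule fracI[OF span_neg[OF a(1)] a(2,3)]) (simp add: a(4))
  qed
  have inv: "inverse x \<in> frac H" if xf: "x \<in> frac H" "x \<noteq> 0" for x
  proof -
    obtain p q where a: "p \<in> span H" "q \<in> span H" "q \<noteq> 0" "x = p/q" by (rule fracE[OF xf(1)])
    have "p \<noteq> 0" using a xf(2) by auto
    show ?thesis by (rule fracI[OF a(2) a(1) \<open>p \<noteq> 0\<close>]) (simp add: a(4))
  qed
  show ?thesis unfolding is_subfield_def using z o add mul neg inv by simp
qed

lemma H_frac: "mult_subgroup H \<Longrightarrow> H \<subseteq> frac H"
proof
  fix x assume "mult_subgroup H" "x \<in> H"
  then show "x \<in> frac H" by (intro fracI[OF span_H span_one, of x H x]) auto
qed

lemma gen_frac: "mult_subgroup H \<Longrightarrow> gen_subfield H \<subseteq> frac H"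
  unfolding gen_subfield_def using frac_subfield H_frac by blast

lemma partition_vanish:
  fixes t :: "'i \<Rightarrow> 'a::ab_group_add"
  assumes "finite I" "sum t I = 0"
   and min: "\<And>J. J \<subseteq> I \<Longrightarrow> J \<noteq> {} \<Longrightarrow> sum t J = 0 \<Longrightarrow>
        (\<forall>J'. J' \<subseteq> J \<longrightarrow> J' \<noteq> {} \<longrightarrow> J' \<noteq> J \<longrightarrow> sum t J' \<noteq> 0) \<Longrightarrow> \<forall>i\<in>J. \<forall>j\<in>J. k i = k j"
  shows "sum t {i\<in>I. k i = n} = 0"
  using assms
proof (induction "card I" arbitrary: I rule: less_induct)
  case less
  show ?case
  proof (cases "I = {}")
    case True then show ?thesis by simp
  next
    case False
    define C where "C = {J. J \<subseteq> I \<and> J \<noteq> {} \<and> sum t J = 0}"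
    have "I \<in> C" using False less.prems(2) by (simp add: C_def)
    then obtain J where J: "J \<in> C" and Jm: "\<forall>J'. J' \<in> C \<longrightarrow> card J \<le> card J'"
      using ex_has_least_nat[of "\<lambda>J. J \<in> C" I card] by blast
    have JI: "J \<subseteq> I" "J \<noteq> {}" "sum t J = 0" using J by (auto simp: C_def)
    have fJ: "finite J" using JI less.prems(1) finite_subset by blast
    have "\<forall>J'. J' \<subseteq> J \<longrightarrow> J' \<noteq> {} \<longrightarrow> J' \<noteq> J \<longrightarrow> sum t J' \<noteq> 0"
    proof (intro allI impI notI)
      fix J' assume "J' \<subseteq> J" "J' \<noteq> {}" "J' \<noteq> J" "sum t J' = 0"
      then have "J' \<in> C" using JI by (auto simp: C_def)
      moreover have "card J' < card J" using \<open>J' \<subseteq> J\<close> \<open>J' \<noteq> J\<close> fJ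
        by (meson psubsetI psubset_card_mono)
      ultimately have "card J \<le> card J'" using Jm by blast
      then show False using \<open>card J' < card J\<close> by linarith
    qed
    then have kJ: "\<forall>i\<in>J. \<forall>j\<in>J. k i = k j" by (rule less.prems(3)[OF JI])
    have "I - J \<subset> I" using JI by blast
    then have c: "card (I - J) < card I" using less.prems(1) by (rule psubset_card_mono[rotated])
    have s: "sum t (I - J) = 0" using JI less.prems(1,2) by (simp add: sum_diff)
    have ih: "sum t {i\<in>I-J. k i = n} = 0"
    proof (rule less.hyps[OF c _ s])
      show "finite (I - J)" using less.prems(1) by simp
      fix J' assume a: "J' \<subseteq> I - J" "J' \<noteq> {}" "sum t J' = 0"
        "\<forall>J''. J'' \<subseteq> J' \<longrightarrow> J'' \<noteq> {} \<longrightarrow> J'' \<noteq> J' \<longrightarrow> sum t J'' \<noteq> 0"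
      have "J' \<subseteq> I" using a(1) by blast
      then show "\<forall>i\<in>J'. \<forall>j\<in>J'. k i = k j" by (rule less.prems(3)[OF _ a(2,3,4)])
    qed
    have split: "{i\<in>I. k i = n} = {i\<in>I-J. k i = n} \<union> {i\<in>J. k i = n}" using JI by auto
    have sJ: "sum t {i\<in>J. k i = n} = 0"
    proof (cases "\<exists>j\<in>J. k j = n")
      case True
      then have "{i\<in>J. k i = n} = J" using kJ by blast
      then show ?thesis using JI by simp
    next
      case False
      then have e: "{i\<in>J. k i = n} = {}" by auto
      show ?thesis by (simp only: e sum.empty)
    qed
    have "sum t {i\<in>I. k i = n} = sum t {i\<in>I-J. k i = n} + sum t {i\<in>J. k i = n}"
      unfolding split using less.prems(1) fJ by (intro sum.union_disjoint) auto
    then show ?thesis using ih sJ by simp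
  qed
qed

definition EE :: "'k::linordered_field cx set \<Rightarrow> 'k set \<Rightarrow> 'k cx set" where
  "EE G A = {g * of_k a | g a. g \<in> G \<and> a \<in> A}"

lemma of_k_mult: "of_k (a * b) = of_k a * of_k (b::'k::linordered_field)"
  by (simp add: of_k_def times_cx_def)

lemma of_k_1: "of_k (1::'k::linordered_field) = 1"
  by (simp add: of_k_def one_cx_def)

lemma of_k_inverse: "of_k (inverse a) = inverse (of_k (a::'k::linordered_field))"
  by (cases "a = 0") (simp_all add: of_k_def inverse_cx_def field_simps)

lemma of_k_eq0: "of_k (a::'k::linordered_field) = 0 \<longleftrightarrow> a = 0"
  by (simp add: of_k_def zero_cx_def)

lemma msg_one: "mult_subgroup X \<Longrightarrow> 1 \<in> X" by (simp add: mult_subgroup_def)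
lemma msg_mult: "mult_subgroup X \<Longrightarrow> x \<in> X \<Longrightarrow> y \<in> X \<Longrightarrow> x * y \<in> X" by (simp add: mult_subgroup_def)
lemma msg_inv: "mult_subgroup X \<Longrightarrow> x \<in> X \<Longrightarrow> inverse x \<in> X" by (simp add: mult_subgroup_def)
lemma msg_nz: "mult_subgroup X \<Longrightarrow> x \<in> X \<Longrightarrow> x \<noteq> 0" by (simp add: mult_subgroup_def)
lemma msg_div: "mult_subgroup X \<Longrightarrow> x \<in> X \<Longrightarrow> y \<in> X \<Longrightarrow> x / y \<in> X"
  by (simp add: divide_inverse msg_mult msg_inv)
lemma msg_pow: "mult_subgroup X \<Longrightarrow> x \<in> X \<Longrightarrow> x ^ n \<in> X"
  by (induction n) (simp_all add: msg_one msg_mult)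

lemma EE_group:
  assumes "mult_subgroup G" "mult_subgroup A"
  shows "mult_subgroup (EE G A)"
proof -
  have 1: "1 \<in> EE G A" unfolding EE_def using assms msg_one[of G] msg_one[of A] of_k_1
    by (metis (mono_tags, lifting) mem_Collect_eq mult_1)
  have inv: "x \<noteq> 0 \<and> inverse x \<in> EE G A" if xE: "x \<in> EE G A" for x
  proof -
    obtain g a where x: "x = g * of_k a" "g \<in> G" "a \<in> A" using xE unfolding EE_def by blast
    have "g \<noteq> 0" "a \<noteq> 0" using x assms msg_nz by blast+
    then have "x \<noteq> 0" using x of_k_eq0 by auto
    moreover have "inverse x = inverse g * of_k (inverse a)" using x by (simp add: of_k_inverse)
    moreover have "inverse g \<in> G" "inverse a \<in> A" using msg_inv assms x by blast+
    ultimately show ?thesis unfolding EE_def by blast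
  qed
  have mul: "x * y \<in> EE G A" if xE: "x \<in> EE G A" "y \<in> EE G A" for x y
  proof -
    obtain g a where x: "x = g * of_k a" "g \<in> G" "a \<in> A" using xE(1) unfolding EE_def by blast
    obtain g' a' where y: "y = g' * of_k a'" "g' \<in> G" "a' \<in> A" using xE(2) unfolding EE_def by blast
    have "x * y = (g * g') * of_k (a * a')" using x y by (simp add: of_k_mult algebra_simps)
    moreover have "g * g' \<in> G" "a * a' \<in> A" using msg_mult assms x y by blast+
    ultimately show ?thesis unfolding EE_def by blast
  qed
  show ?thesis unfolding mult_subgroup_def using 1 inv mul by blast
qed

lemma EE_mono: "G' \<subseteq> G \<Longrightarrow> A' \<subseteq> A \<Longrightarrow> EE G' A' \<subseteq> EE G A"
  unfolding EE_def by blast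

lemma model_facts_1:
  assumes "model_T \<Gamma> \<epsilon> G A gp dp"
  shows "mult_subgroup G"
  using assms unfolding model_T_def by (elim conjE) assumption

lemma model_facts_2:
  assumes "model_T \<Gamma> \<epsilon> G A gp dp"
  shows "G \<subseteq> circle"
  using assms unfolding model_T_def by (elim conjE) assumption

lemma model_facts_3:
  assumes "model_T \<Gamma> \<epsilon> G A gp dp"
  shows "mult_subgroup A"
  using assms unfolding model_T_def by (elim conjE) assumption

lemma model_facts_4:
  assumes "model_T \<Gamma> \<epsilon> G A gp dp"
  shows "A \<subseteq> {x. 0 < x}"
  using assms unfolding model_T_def by (elim conjE) assumption

lemma model_facts_5:
  assumes "model_T \<Gamma> \<epsilon> G A gp dp"
  shows "1 < dp \<epsilon>"
  using assms unfolding model_T_def by (elim conjE) assumption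

lemma model_facts_6:
  assumes "model_T \<Gamma> \<epsilon> G A gp dp"
  shows "\<forall>a\<in>A. 1 < a \<longrightarrow> dp \<epsilon> \<le> a"
  using assms unfolding model_T_def by (elim conjE) assumption

lemma model_facts_7:
  assumes "model_T \<Gamma> \<epsilon> G A gp dp"
  shows "\<forall>k>0. \<exists>a\<in>A. a \<le> k \<and> k < a * dp \<epsilon>"
  using assms unfolding model_T_def by (elim conjE) assumption

lemma model_facts_8:
  assumes "model_T \<Gamma> \<epsilon> G A gp dp"
  shows "torsion G = gp ` torsion \<Gamma>"
  using assms unfolding model_T_def by (elim conjE) assumption

lemma model_facts_9:
  assumes "model_T \<Gamma> \<epsilon> G A gp dp"
  shows "\<forall>n a x. (\<forall>i<n. a i \<noteq> 0 \<and> x i \<in> {g * of_k b | g b. g \<in> G \<and> b \<in> A})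
            \<and> nondeg_solution n a x \<longrightarrow>
          (\<exists>g d. (\<forall>i<n. g i \<in> \<Gamma> \<and> d i \<in> Delta \<epsilon>)
             \<and> nondeg_solution n a (\<lambda>i. g i * complex_of_real (d i))
             \<and> (\<forall>i<n. x i = gp (g i) * of_k (dp (d i))))"
  using assms unfolding model_T_def by (elim conjE) assumption

lemmas model_facts = model_facts_1 model_facts_2 model_facts_3 model_facts_4 model_facts_5 model_facts_6 model_facts_7 model_facts_8 model_facts_9

lemma mann_set:
  fixes z :: "'i \<Rightarrow> 'k::linordered_field cx"
  assumes model: "model_T \<Gamma> \<epsilon> G A gp dp"
    and fin: "finite J" and a: "\<forall>j\<in>J. a j \<noteq> 0" and z: "\<forall>j\<in>J. z j \<in> EE G A"
    and sum1: "(\<Sum>j\<in>J. of_rat (a j) * z j) = 1"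
    and nd: "\<forall>I. I \<subseteq> J \<and> I \<noteq> {} \<longrightarrow> (\<Sum>j\<in>I. of_rat (a j) * z j) \<noteq> 0"
  shows "\<forall>j\<in>J. \<exists>\<gamma> \<delta>. \<gamma> \<in> \<Gamma> \<and> \<delta> \<in> Delta \<epsilon> \<and> z j = gp \<gamma> * of_k (dp \<delta>)"
proof -
  obtain f where bij: "bij_betw f {..<card J} J"
    using ex_bij_betw_nat_finite[OF fin] by (auto simp: atLeast0LessThan)
  define n where "n = card J"
  note M = model_facts(9)[OF model, rule_format, of n "a \<circ> f" "z \<circ> f"]
  have fJ: "f i \<in> J" if "i < n" for i using bij that unfolding n_def by (auto dest: bij_betwE)
  have h1: "\<forall>i<n. (a \<circ> f) i \<noteq> 0 \<and> (z \<circ> f) i \<in> {g * of_k b | g b. g \<in> G \<and> b \<in> A}"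
    using fJ a z unfolding EE_def by auto
  have inj: "inj_on f {..<n}" using bij unfolding n_def bij_betw_def by simp
  have sI: "(\<Sum>i\<in>I. of_rat ((a \<circ> f) i) * (z \<circ> f) i) = (\<Sum>j\<in>f ` I. of_rat (a j) * z j)"
    if "I \<subseteq> {..<n}" for I
  proof -
    have "inj_on f I" using inj that inj_on_subset by blast
    then show ?thesis by (simp add: sum.reindex)
  qed
  have im: "f ` {..<n} = J" using bij unfolding n_def bij_betw_def by simp
  have h2: "nondeg_solution n (a \<circ> f) (z \<circ> f)"
    unfolding nondeg_solution_def
  proof (intro conjI allI impI)
    show "(\<Sum>i<n. of_rat ((a \<circ> f) i) * (z \<circ> f) i) = 1" using sI[of "{..<n}"] im sum1 by simp
    fix I assume "I \<subseteq> {..<n} \<and> I \<noteq> {}"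
    then show "(\<Sum>i\<in>I. of_rat ((a \<circ> f) i) * (z \<circ> f) i) \<noteq> 0"
      using sI[of I] nd[rule_format, of "f ` I"] im by auto
  qed
  obtain g d where gd: "\<forall>i<n. g i \<in> \<Gamma> \<and> d i \<in> Delta \<epsilon>" "\<forall>i<n. (z \<circ> f) i = gp (g i) * of_k (dp (d i))"
    using M h1 h2 by blast
  show ?thesis
  proof
    fix j assume "j \<in> J"
    then obtain i where "i < n" "j = f i" using im by auto
    then show "\<exists>\<gamma> \<delta>. \<gamma> \<in> \<Gamma> \<and> \<delta> \<in> Delta \<epsilon> \<and> z j = gp \<gamma> * of_k (dp \<delta>)"
      using gd by auto
  qed
qed

lemma core:
  fixes x :: "'k::linordered_field cx"
  assumes model: "model_T \<Gamma> \<epsilon> G A gp dp"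
   and G': "mult_subgroup G'" "G' \<subseteq> G" "gp ` \<Gamma> \<subseteq> G'"
   and A': "mult_subgroup A'" "A' \<subseteq> A" "dp ` Delta \<epsilon> \<subseteq> A'"
   and x: "x \<in> EE G A"
   and N: "finite N" "\<forall>n\<in>N. r n \<in> gen_subfield (EE G' A')" "n0 \<in> N" "r n0 \<noteq> 0"
          "(\<Sum>n\<in>N. r n * x ^ n) = 0"
  shows "\<exists>m\<ge>1. x ^ m \<in> EE G' A'"
proof -
  define H where "H = EE G' A'"
  define E where "E = EE G A"
  have Gg: "mult_subgroup G" and Ag: "mult_subgroup A" using model_facts[OF model] by blast+
  have Hg: "mult_subgroup H" unfolding H_def by (rule EE_group[OF G'(1) A'(1)])
  have Eg: "mult_subgroup E" unfolding E_def by (rule EE_group[OF Gg Ag])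
  have HE: "H \<subseteq> E" unfolding H_def E_def by (rule EE_mono[OF G'(2) A'(2)])
  have xE: "x \<in> E" using x by (simp add: E_def)
  have x0: "x \<noteq> 0" using msg_nz[OF Eg xE] .
  have "\<forall>n\<in>N. r n \<in> frac H" using gen_frac[OF Hg] N(2) unfolding H_def by blast
  then have "\<forall>n\<in>N. \<exists>p q. r n = p / q \<and> p \<in> span H \<and> q \<in> span H \<and> q \<noteq> 0"
    unfolding frac_def by blast
  then obtain p d where pd: "\<And>n. n \<in> N \<Longrightarrow> r n = p n / d n \<and> p n \<in> span H \<and> d n \<in> span H \<and> d n \<noteq> 0"
    by metis
  define s where "s n = p n * prod d (N - {n})" for n
  have dspan: "\<forall>n\<in>N. d n \<in> span H" using pd by blast
  have s_span: "s n \<in> span H" if "n \<in> N" for n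
  proof -
    have "prod d (N - {n}) \<in> span H" by (rule span_prod[OF Hg]) (use N(1) dspan in auto)
    then show ?thesis unfolding s_def using span_mult[OF Hg] pd[OF that] by blast
  qed
  have Dnz: "prod d N \<noteq> 0" using N(1) pd by (simp add: prod_zero_iff)
  have s_eq: "s n = r n * prod d N" if "n \<in> N" for n
  proof -
    have "prod d N = d n * prod d (N - {n})" using N(1) that by (simp add: prod.remove)
    then show ?thesis unfolding s_def using pd[OF that] by simp
  qed
  have sum_s: "(\<Sum>n\<in>N. s n * x ^ n) = 0"
  proof -
    have "(\<Sum>n\<in>N. s n * x ^ n) = (\<Sum>n\<in>N. r n * x ^ n) * prod d N"
      unfolding sum_distrib_right by (rule sum.cong) (simp_all add: s_eq)
    then show ?thesis using N(5) by simp
  qed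
  have s0: "s n0 \<noteq> 0" using s_eq[OF N(3)] N(4) Dnz by simp
  have "\<forall>n\<in>N. \<exists>S f. finite S \<and> S \<subseteq> H \<and> s n = (\<Sum>h\<in>S. of_rat (f h) * h)"
    using s_span span_repr by blast
  then obtain S f where Sf: "\<And>n. n \<in> N \<Longrightarrow> finite (S n) \<and> S n \<subseteq> H \<and> s n = (\<Sum>h\<in>S n. of_rat (f n h) * h)"
    by metis
  define T where "T = Sigma N S"
  define t where "t i = of_rat (f (fst i) (snd i)) * snd i * x ^ fst i" for i
  have fT: "finite T" unfolding T_def using N(1) Sf by auto
  have TH: "snd i \<in> H" "fst i \<in> N" if "i \<in> T" for i
  proof -
    from that have "fst i \<in> N" "snd i \<in> S (fst i)" unfolding T_def by auto
    then show "snd i \<in> H" "fst i \<in> N" using Sf by blast+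
  qed
  have inner: "(\<Sum>h\<in>S n. t (n, h)) = s n * x ^ n" if "n \<in> N" for n
    unfolding t_def using Sf[OF that] by (simp add: sum_distrib_right)
  have sumT: "sum t T = 0"
  proof -
    have "sum t T = (\<Sum>n\<in>N. \<Sum>h\<in>S n. t (n, h))"
      unfolding T_def using N(1) Sf by (subst sum.Sigma) auto
    also have "\<dots> = (\<Sum>n\<in>N. s n * x ^ n)" using inner by simp
    finally show ?thesis using sum_s by simp
  qed
  have cls: "sum t {i\<in>T. fst i = n0} \<noteq> 0"
  proof -
    have e: "{i\<in>T. fst i = n0} = Pair n0 ` S n0" unfolding T_def using N(3) by auto
    have "sum t {i\<in>T. fst i = n0} = (\<Sum>h\<in>S n0. t (n0, h))"
      unfolding e by (subst sum.reindex) (auto simp: inj_on_def)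
    also have "\<dots> = s n0 * x ^ n0" using inner[OF N(3)] .
    finally show ?thesis using s0 x0 by simp
  qed
  define P where "P J \<longleftrightarrow> J \<subseteq> T \<and> J \<noteq> {} \<and> sum t J = 0 \<and>
      (\<forall>J'. J' \<subseteq> J \<longrightarrow> J' \<noteq> {} \<longrightarrow> J' \<noteq> J \<longrightarrow> sum t J' \<noteq> 0)" for J
  have exJ: "\<exists>J. P J \<and> \<not> (\<forall>i\<in>J. \<forall>j\<in>J. fst i = fst j)"
  proof (rule ccontr)
    assume nex: "\<not> ?thesis"
    have "sum t {i\<in>T. fst i = n0} = 0"
    proof (rule partition_vanish[OF fT sumT])
      fix J assume "J \<subseteq> T" "J \<noteq> {}" "sum t J = 0"
        "\<forall>J'. J' \<subseteq> J \<longrightarrow> J' \<noteq> {} \<longrightarrow> J' \<noteq> J \<longrightarrow> sum t J' \<noteq> 0"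
      then have "P J" unfolding P_def by (intro conjI)
      then show "\<forall>i\<in>J. \<forall>j\<in>J. fst i = fst j" using nex by blast
    qed
    then show False using cls by simp
  qed
  then obtain J where PJ: "P J" and Jk: "\<not> (\<forall>i\<in>J. \<forall>j\<in>J. fst i = fst j)"
    by blast
  have J1: "J \<subseteq> T" using PJ unfolding P_def by (elim conjE)
  have J2: "J \<noteq> {}" using PJ unfolding P_def by (elim conjE)
  have J3: "sum t J = 0" using PJ unfolding P_def by (elim conjE)
  note J = J1 J2 J3
  have Jmin0: "\<forall>J'. J' \<subseteq> J \<longrightarrow> J' \<noteq> {} \<longrightarrow> J' \<noteq> J \<longrightarrow> sum t J' \<noteq> 0"
    using PJ unfolding P_def by (elim conjE)
  note Jmin = Jmin0[rule_format]
  from Jk obtain i j where ij: "i \<in> J" "j \<in> J" "fst i \<noteq> fst j" by blast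
  have fJ: "finite J" using fT J(1) finite_subset by blast
  have tnz: "t l \<noteq> 0" if "l \<in> J" for l
  proof
    assume "t l = 0"
    have "{l} \<noteq> J" using ij by auto
    then have "sum t {l} \<noteq> 0" by (intro Jmin) (use that in auto)
    then show False using \<open>t l = 0\<close> by simp
  qed
  have lT: "l \<in> T" if "l \<in> J" for l using J(1) that by blast
  have hnz: "snd l \<noteq> 0" if "l \<in> J" for l using msg_nz[OF Hg TH(1)[OF lT[OF that]]] .
  have fnz: "f (fst l) (snd l) \<noteq> 0" if "l \<in> J" for l using tnz[OF that] unfolding t_def by auto
  define a where "a l = - f (fst l) (snd l) / f (fst i) (snd i)" for l
  define z where "z l = (snd l * x ^ fst l) / (snd i * x ^ fst i)" for l
  have key: "of_rat (a l) * z l = t l / (- t i)" for l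
  proof -
    have "of_rat (f (fst i) (snd i)) \<noteq> (0::'k cx)" using fnz[OF ij(1)] by simp
    then show ?thesis using hnz[OF ij(1)] x0
      unfolding a_def z_def t_def by (simp add: of_rat_divide of_rat_minus field_simps)
  qed
  define J0 where "J0 = J - {i}"
  have zH: "\<forall>l\<in>J0. \<exists>\<gamma> \<delta>. \<gamma> \<in> \<Gamma> \<and> \<delta> \<in> Delta \<epsilon> \<and> z l = gp \<gamma> * of_k (dp \<delta>)"
  proof (rule mann_set[OF model])
    show "finite J0" using fJ unfolding J0_def by simp
    show "\<forall>l\<in>J0. a l \<noteq> 0" using fnz fnz[OF ij(1)] unfolding a_def J0_def by simp
    show "\<forall>l\<in>J0. z l \<in> EE G A"
    proof
      fix l assume "l \<in> J0"
      then have l: "l \<in> J" unfolding J0_def by simp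
      have "snd l \<in> E" "snd i \<in> E" using TH(1)[OF lT[OF l]] TH(1)[OF lT[OF ij(1)]] HE by blast+
      then have "z l \<in> E" unfolding z_def
        by (intro msg_div[OF Eg] msg_mult[OF Eg] msg_pow[OF Eg xE])
      then show "z l \<in> EE G A" by (simp add: E_def)
    qed
    have sJ0: "(\<Sum>l\<in>J0. of_rat (a l) * z l) = (\<Sum>l\<in>J0. t l) / (- t i)"
      unfolding key by (simp add: sum_divide_distrib sum_negf)
    have "(\<Sum>l\<in>J0. t l) = - t i"
      using J(3) fJ ij(1) unfolding J0_def by (simp add: sum_diff1)
    then show "(\<Sum>l\<in>J0. of_rat (a l) * z l) = 1" using sJ0 tnz[OF ij(1)] by simp
    show "\<forall>I. I \<subseteq> J0 \<and> I \<noteq> {} \<longrightarrow> (\<Sum>l\<in>I. of_rat (a l) * z l) \<noteq> 0"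
    proof (intro allI impI)
      fix I assume I: "I \<subseteq> J0 \<and> I \<noteq> {}"
      then have "I \<subseteq> J" "I \<noteq> J" using ij(1) unfolding J0_def by auto
      then have "sum t I \<noteq> 0" by (intro Jmin) (use I in auto)
      moreover have "(\<Sum>l\<in>I. of_rat (a l) * z l) = (\<Sum>l\<in>I. t l) / (- t i)"
        unfolding key by (simp add: sum_divide_distrib sum_negf)
      ultimately show "(\<Sum>l\<in>I. of_rat (a l) * z l) \<noteq> 0" using tnz[OF ij(1)] by simp
    qed
  qed
  have jJ0: "j \<in> J0" using ij unfolding J0_def by auto
  obtain \<gamma> \<delta> where gd: "\<gamma> \<in> \<Gamma>" "\<delta> \<in> Delta \<epsilon>" "z j = gp \<gamma> * of_k (dp \<delta>)"
    using zH jJ0 by blast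
  have "gp \<gamma> \<in> G'" using gd(1) G'(3) by blast
  moreover have "dp \<delta> \<in> A'" using gd(2) A'(3) by blast
  ultimately have zjH: "z j \<in> H" unfolding H_def EE_def using gd(3) by blast
  have q: "z j * snd i / snd j \<in> H"
    by (rule msg_div[OF Hg msg_mult[OF Hg zjH TH(1)[OF lT[OF ij(1)]]] TH(1)[OF lT[OF ij(2)]]])
  have qe: "z j * snd i / snd j = x ^ fst j / x ^ fst i"
    using hnz[OF ij(1)] hnz[OF ij(2)] x0 unfolding z_def by (simp add: field_simps)
  show ?thesis
  proof (cases "fst i < fst j")
    case True
    have "x ^ (fst j - fst i) = x ^ fst j / x ^ fst i" using True x0 by (simp add: power_diff)
    then have "x ^ (fst j - fst i) \<in> H" using q qe by simp
    then show ?thesis using True unfolding H_def by (intro exI[of _ "fst j - fst i"]) simp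
  next
    case False
    then have lt: "fst j < fst i" using ij(3) by simp
    have "x ^ (fst i - fst j) = inverse (x ^ fst j / x ^ fst i)" using lt x0 by (simp add: power_diff)
    moreover have "inverse (x ^ fst j / x ^ fst i) \<in> H" using q qe msg_inv[OF Hg] by metis
    ultimately have "x ^ (fst i - fst j) \<in> H" by (simp only:)
    then show ?thesis using lt unfolding H_def by (intro exI[of _ "fst i - fst j"]) simp
  qed
qed

lemma alg_lemma:
  fixes x :: "'a::field"
  assumes free: "free_over kk E0 FF" and xE: "x \<in> E0" and x0: "x \<noteq> 0"
    and F: "0 \<in> FF" "1 \<in> FF" "- x \<in> FF"
  shows "\<exists>N r n0. finite N \<and> (\<forall>n\<in>N. r n \<in> kk) \<and> n0 \<in> N \<and> r n0 \<noteq> 0 \<and> (\<Sum>n\<in>N. r n * x ^ n) = 0"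
proof -
  have notF: "\<not> alg_indep_over FF {x}"
  proof
    assume ind: "alg_indep_over FF {x}"
    define c where "c e = (if e = [0] then - x else if e = [1] then 1 else (0::'a))" for e :: "nat list"
    have supp: "{e. c e \<noteq> 0} = {[0], [1]}" using x0 by (auto simp: c_def)
    have "c [1] = 0"
    proof (rule ind[unfolded alg_indep_over_def, rule_format, of "[x]" c])
      have s: "(\<Sum>e\<in>{e. c e \<noteq> 0}. c e * (\<Prod>i<length [x]. ([x] ! i) ^ (e ! i))) = 0"
        unfolding supp by (simp add: c_def)
      have cF: "\<forall>e. c e \<in> FF" using F by (simp add: c_def)
      have cl: "\<forall>e. c e \<noteq> 0 \<longrightarrow> length e = length [x]" by (simp add: c_def)
      show "distinct [x] \<and> set [x] \<subseteq> {x} \<and> finite {e. c e \<noteq> 0} \<and>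
        (\<forall>e. c e \<noteq> 0 \<longrightarrow> length e = length [x]) \<and> (\<forall>e. c e \<in> FF) \<and>
        (\<Sum>e\<in>{e. c e \<noteq> 0}. c e * (\<Prod>i<length [x]. ([x] ! i) ^ (e ! i))) = 0"
        using s cF cl supp by simp
    qed
    then show False by (simp add: c_def)
  qed
  then have "\<not> alg_indep_over kk {x}" using free xE unfolding free_over_def by blast
  then obtain xs c where H: "distinct xs" "set xs \<subseteq> {x}" "finite {e. c e \<noteq> 0}"
     "\<forall>e. c e \<noteq> 0 \<longrightarrow> length e = length xs" "\<forall>e. c e \<in> kk"
     "(\<Sum>e\<in>{e. c e \<noteq> 0}. c e * (\<Prod>i<length xs. (xs ! i) ^ (e ! i))) = 0" "\<not> (\<forall>e. c e = 0)"
    unfolding alg_indep_over_def by blast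
  obtain e0 where e0: "c e0 \<noteq> 0" using H(7) by blast
  have xs: "xs = [] \<or> xs = [x]"
  proof (cases xs)
    case Nil then show ?thesis by simp
  next
    case (Cons y ys)
    then have "y = x" "x \<notin> set ys" "set ys \<subseteq> {x}" using H(1,2) by auto
    then have "ys = []" by (cases ys) auto
    then show ?thesis using Cons \<open>y = x\<close> by simp
  qed
  show ?thesis
  proof (cases "xs = []")
    case True
    have "{e. c e \<noteq> 0} = {[]}" using H(4) e0 True by auto
    then have "c [] = 0" using H(6) True by simp
    then show ?thesis using H(4) e0 True by auto
  next
    case False
    then have xsx: "xs = [x]" using xs by simp
    define N where "N = {n. c [n] \<noteq> 0}"
    have l1: "e = [e ! 0]" if "c e \<noteq> 0" for e
    proof -
      have "length e = 1" using H(4) that xsx by simp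
      then show ?thesis by (cases e) auto
    qed
    have supp: "{e. c e \<noteq> 0} = (\<lambda>n. [n]) ` N"
    proof
      show "{e. c e \<noteq> 0} \<subseteq> (\<lambda>n. [n]) ` N"
      proof
        fix e assume "e \<in> {e. c e \<noteq> 0}"
        then have "c e \<noteq> 0" by simp
        then have ee: "e = [e ! 0]" by (rule l1)
        have "c [e ! 0] \<noteq> 0" using \<open>c e \<noteq> 0\<close> by (subst ee[symmetric]) assumption
        note ee this
        then show "e \<in> (\<lambda>n. [n]) ` N" unfolding N_def by blast
      qed
      show "(\<lambda>n. [n]) ` N \<subseteq> {e. c e \<noteq> 0}" unfolding N_def by auto
    qed
    have inj: "inj_on (\<lambda>n::nat. [n]) N" by (auto simp: inj_on_def)
    have fN: "finite N" using H(3) unfolding supp using finite_imageD[OF _ inj] by blast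
    have "(\<Sum>e\<in>{e. c e \<noteq> 0}. c e * (\<Prod>i<length xs. (xs ! i) ^ (e ! i)))
        = (\<Sum>n\<in>N. c [n] * x ^ n)"
      unfolding supp xsx by (subst sum.reindex[OF inj]) simp
    then have s: "(\<Sum>n\<in>N. c [n] * x ^ n) = 0" using H(6) by simp
    have ee: "e0 = [e0 ! 0]" by (rule l1[OF e0])
    have c0: "c [e0 ! 0] \<noteq> 0" using e0 by (subst ee[symmetric]) assumption
    then have "e0 ! 0 \<in> N" unfolding N_def by simp
    note this c0
    then show ?thesis using fN s H(5)
      by (intro exI[of _ N] exI[of _ "\<lambda>n. c [n]"] exI[of _ "e0 ! 0"]) simp
  qed
qed

lemma gen_props1: "X \<subseteq> gen_subfield X"
  unfolding gen_subfield_def by blast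
lemma gen_props2: "0 \<in> gen_subfield X"
  unfolding gen_subfield_def is_subfield_def by (simp only: Inter_iff mem_Collect_eq) blast
lemma gen_props3: "1 \<in> gen_subfield X"
  unfolding gen_subfield_def is_subfield_def by (simp only: Inter_iff mem_Collect_eq) blast
lemma gen_props4: "y \<in> gen_subfield X \<Longrightarrow> - y \<in> gen_subfield X"
  unfolding gen_subfield_def is_subfield_def by (simp only: Inter_iff mem_Collect_eq) blast
lemmas gen_props = gen_props1 gen_props2 gen_props3 gen_props4

lemma of_k_pow: "of_k (a ^ n) = of_k (a::'k::linordered_field) ^ n"
  by (induction n) (simp_all add: of_k_1 of_k_mult)

lemma circ_lemma:
  fixes u :: "'k::linordered_field cx"
  assumes "u \<in> circle" "u * of_k a \<in> circle" "0 < a"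
  shows "a = 1"
proof -
  obtain p q where u: "u = Cx p q" by (cases u)
  have "p * p + q * q = 1" using assms(1) u by (simp add: circle_def)
  moreover have "(p * a) * (p * a) + (q * a) * (q * a) = 1"
    using assms(2) u by (simp add: circle_def of_k_def times_cx_def)
  moreover have "(p * a) * (p * a) + (q * a) * (q * a) = (a * a) * (p * p + q * q)"
    by (simp add: algebra_simps)
  ultimately have "a * a = 1" by simp
  then have "(a - 1) * (a + 1) = 0" by (simp add: algebra_simps)
  then have "a - 1 = 0 \<or> a + 1 = 0" by simp
  then show ?thesis using assms(3) by auto
qed

lemma real_circ:
  fixes u :: "'k::linordered_field cx"
  assumes "u \<in> circle" "of_k b = u * of_k c" "0 < c" "0 < b"
  shows "b = c"
proof -
  obtain p q where u: "u = Cx p q" by (cases u)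
  have pq: "p * p + q * q = 1" using assms(1) u by (simp add: circle_def)
  have e: "b = p * c" "0 = q * c" using assms(2) u by (simp_all add: of_k_def times_cx_def)
  then have "q = 0" using assms(3) by simp
  then have pp: "p * p = 1" using pq by simp
  have "0 < p * c" using e assms(4) by simp
  moreover have "p > 0" using \<open>0 < p * c\<close> assms(3) by (simp add: zero_less_mult_iff)
  moreover have "(p - 1) * (p + 1) = p * p - 1" by (simp add: algebra_simps)
  ultimately have "p - 1 = 0 \<or> p + 1 = 0" using pp by simp
  then have "p = 1" using \<open>p > 0\<close> by auto
  then show ?thesis using e by simp
qed

lemma uniq_A:
  fixes A :: "'k::linordered_field set"
  assumes Ag: "mult_subgroup A" and Apos: "A \<subseteq> {x. 0 < x}"
    and emin: "\<forall>a\<in>A. 1 < a \<longrightarrow> e \<le> a"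
    and a: "a \<in> A" "a \<le> k" "k < a * e" and b: "b \<in> A" "b \<le> k" "k < b * e"
  shows "a = b"
proof -
  have ap: "0 < a" and bp: "0 < b" using a(1) b(1) Apos by auto
  have *: False if xy: "x \<in> A" "y \<in> A" "x < y" "y \<le> k" "k < x * e" for x y
  proof -
    have xp: "0 < x" using xy(1) Apos by auto
    have "y / x \<in> A" using msg_div[OF Ag xy(2) xy(1)] .
    moreover have "1 < y / x" using xy(3) xp by simp
    ultimately have "e \<le> y / x" using emin by blast
    then have "x * e \<le> y" using xp by (simp add: field_simps)
    then show False using xy(4,5) by simp
  qed
  show ?thesis
  proof (rule ccontr)
    assume "a \<noteq> b"
    then have "a < b \<or> b < a" by auto
    then show False
    proof
      assume "a < b" then show False using *[OF a(1) b(1) _ b(2) a(3)] by blast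
    next
      assume "b < a" then show False using *[OF b(1) a(1) _ a(2) b(3)] by blast
    qed
  qed
qed

lemma lam_eq:
  assumes Ag: "mult_subgroup A" and Apos: "A \<subseteq> {x. 0 < x}"
    and emin: "\<forall>a\<in>A. 1 < a \<longrightarrow> e \<le> a"
    and a: "a \<in> A" "a \<le> k" "k < a * e"
  shows "lam A e k = a"
  unfolding lam_def
proof (rule the_equality)
  show "a \<in> A \<and> a \<le> k \<and> k < a * e" using a by simp
  fix b assume "b \<in> A \<and> b \<le> k \<and> k < b * e"
  then have "a = b" using uniq_A[OF Ag Apos emin a] by blast
  then show "b = a" by simp
qed

theorem mainTheorem12:
  fixes \<Gamma> :: "complex set" and \<epsilon> :: real
    and G :: "'k::linordered_field cx set" and A :: "'k set"
    and gp :: "complex \<Rightarrow> 'k cx" and dp :: "real \<Rightarrow> 'k"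
    and \<kappa> :: "'z set"
    and K' :: "'k set" and G' :: "'k cx set" and A' :: "'k set"
  assumes model: "model_T \<Gamma> \<epsilon> G A gp dp"
    and kappa_inf: "infinite \<kappa>"
    and kappa_big: "ordLess2 (card_of {g * complex_of_real d | g d. g \<in> \<Gamma> \<and> d \<in> Delta \<epsilon>}) (card_of \<kappa>)"
    and K'_rc: "real_closed_subfield K'"
    and K'_small: "ordLess2 (card_of K') (card_of \<kappa>)"
    and G'_pure: "pure_subgroup G' G" and G'_Gamma: "gp ` \<Gamma> \<subseteq> G'"
    and G'_K': "G' \<subseteq> adjoin_i K'"
    and A'_pure: "pure_subgroup A' A" and A'_Delta: "dp ` Delta \<epsilon> \<subseteq> A'"
    and A'_K': "A' \<subseteq> K'"
    and free: "free_over (gen_subfield {g * of_k a | g a. g \<in> G' \<and> a \<in> A'})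
                 (adjoin_i K') (gen_subfield {g * of_k a | g a. g \<in> G \<and> a \<in> A})"
  shows "G \<inter> adjoin_i K' = G' \<and> A \<inter> K' = A'
    \<and> ((\<forall>k\<in>K'. 0 < k \<longrightarrow> (\<exists>a\<in>A'. a \<le> k \<and> k < a * dp \<epsilon>))
        \<longleftrightarrow> (\<forall>k\<in>K'. 0 < k \<longrightarrow> lam A (dp \<epsilon>) k \<in> K'))"
proof -
  have Gg: "mult_subgroup G" by (rule model_facts(1)[OF model])
  have Gc: "G \<subseteq> circle" by (rule model_facts(2)[OF model])
  have Ag: "mult_subgroup A" by (rule model_facts(3)[OF model])
  have Apos: "A \<subseteq> {x. 0 < x}" by (rule model_facts(4)[OF model])
  have emin: "\<forall>a\<in>A. 1 < a \<longrightarrow> dp \<epsilon> \<le> a" by (rule model_facts(6)[OF model])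
  have disc: "\<forall>k>0. \<exists>a\<in>A. a \<le> k \<and> k < a * dp \<epsilon>" by (rule model_facts(7)[OF model])
  have tors: "torsion G = gp ` torsion \<Gamma>" by (rule model_facts(8)[OF model])
  have G'g: "mult_subgroup G'" using G'_pure unfolding pure_subgroup_def by (elim conjE)
  have G'G: "G' \<subseteq> G" using G'_pure unfolding pure_subgroup_def by (elim conjE)
  have G'p: "\<forall>m\<ge>1. G' \<inter> pows m G = pows m G'" using G'_pure unfolding pure_subgroup_def by (elim conjE)
  have A'g: "mult_subgroup A'" using A'_pure unfolding pure_subgroup_def by (elim conjE)
  have A'A: "A' \<subseteq> A" using A'_pure unfolding pure_subgroup_def by (elim conjE)
  have A'p: "\<forall>m\<ge>1. A' \<inter> pows m A = pows m A'" using A'_pure unfolding pure_subgroup_def by (elim conjE)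
  have K'0: "0 \<in> K'" using K'_rc unfolding real_closed_subfield_def is_subfield_def by (elim conjE)
  have free': "free_over (gen_subfield (EE G' A')) (adjoin_i K') (gen_subfield (EE G A))"
    using free unfolding EE_def .
  have step: "\<exists>m\<ge>1. y ^ m \<in> EE G' A'" if yE: "y \<in> EE G A" and yK: "y \<in> adjoin_i K'" for y
  proof -
    have y0: "y \<noteq> 0" using msg_nz[OF EE_group[OF Gg Ag] yE] .
    have "y \<in> gen_subfield (EE G A)" using yE gen_props(1) by blast
    then have ny: "- y \<in> gen_subfield (EE G A)" by (rule gen_props(4))
    obtain N r n0 where Nr: "finite N" "\<forall>n\<in>N. r n \<in> gen_subfield (EE G' A')" "n0 \<in> N" "r n0 \<noteq> 0"
      "(\<Sum>n\<in>N. r n * y ^ n) = 0"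
      using alg_lemma[OF free' yK y0 gen_props(2) gen_props(3) ny] by blast
    show ?thesis by (rule core[OF model G'g G'G G'_Gamma A'g A'A A'_Delta yE Nr])
  qed
  have Gpart: "G \<inter> adjoin_i K' = G'"
  proof
    show "G' \<subseteq> G \<inter> adjoin_i K'" using G'G G'_K' by blast
    show "G \<inter> adjoin_i K' \<subseteq> G'"
    proof
      fix g assume gg: "g \<in> G \<inter> adjoin_i K'"
      then have gG: "g \<in> G" and gK: "g \<in> adjoin_i K'" by auto
      have "g = g * of_k 1" by (simp add: of_k_1)
      then have gE: "g \<in> EE G A" unfolding EE_def using gG msg_one[OF Ag] by blast
      obtain m where m: "m \<ge> 1" "g ^ m \<in> EE G' A'" using step[OF gE gK] by blast
      then obtain g' a' where ga: "g ^ m = g' * of_k a'" "g' \<in> G'" "a' \<in> A'"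
        unfolding EE_def by blast
      have gmG: "g ^ m \<in> G" by (rule msg_pow[OF Gg gG])
      have "g' \<in> circle" using ga(2) G'G Gc by blast
      moreover have "g' * of_k a' \<in> circle" using gmG Gc ga(1) by auto
      moreover have "0 < a'" using ga(3) A'A Apos by blast
      ultimately have "a' = 1" by (rule circ_lemma)
      then have gm: "g ^ m = g'" using ga(1) by (simp add: of_k_1)
      have "g' \<in> pows m G" unfolding pows_def using gm gG by blast
      then have "g' \<in> pows m G'" using G'p m(1) ga(2) by blast
      then obtain y where y: "y \<in> G'" "g' = y ^ m" unfolding pows_def by blast
      have yG: "y \<in> G" using y(1) G'G by blast
      have y0: "y \<noteq> 0" using msg_nz[OF G'g y(1)] .
      define w where "w = g / y"
      have wG: "w \<in> G" unfolding w_def by (rule msg_div[OF Gg gG yG])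
      have "w ^ m = 1" unfolding w_def using gm y(2) y0 by (simp add: power_divide)
      then have "w \<in> torsion G" unfolding torsion_def using wG m(1) by blast
      then obtain \<gamma> where "\<gamma> \<in> torsion \<Gamma>" "w = gp \<gamma>" using tors by blast
      then have "w \<in> G'" using G'_Gamma unfolding torsion_def by blast
      moreover have "g = w * y" unfolding w_def using y0 by simp
      ultimately show "g \<in> G'" using msg_mult[OF G'g _ y(1)] by simp
    qed
  qed
  have Apart: "A \<inter> K' = A'"
  proof
    show "A' \<subseteq> A \<inter> K'" using A'A A'_K' by blast
    show "A \<inter> K' \<subseteq> A'"
    proof
      fix a assume aa: "a \<in> A \<inter> K'"
      then have aA: "a \<in> A" and aK: "a \<in> K'" by auto
      have ap: "0 < a" using aA Apos by blast
      have "of_k a = 1 * of_k a" by simp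
      then have aE: "of_k a \<in> EE G A" unfolding EE_def using aA msg_one[OF Gg] by blast
      have aKi: "of_k a \<in> adjoin_i K'" unfolding of_k_def adjoin_i_def using aK K'0 by blast
      obtain m where m: "m \<ge> 1" "of_k a ^ m \<in> EE G' A'" using step[OF aE aKi] by blast
      then obtain g' a' where ga: "of_k a ^ m = g' * of_k a'" "g' \<in> G'" "a' \<in> A'"
        unfolding EE_def by blast
      have "of_k (a ^ m) = g' * of_k a'" using ga(1) by (simp add: of_k_pow)
      moreover have "g' \<in> circle" using ga(2) G'G Gc by blast
      moreover have "0 < a'" using ga(3) A'A Apos by blast
      moreover have "0 < a ^ m" using ap by simp
      ultimately have am: "a ^ m = a'" using real_circ by blast
      have "a' \<in> pows m A" unfolding pows_def using am aA by blast
      then have "a' \<in> pows m A'" using A'p m(1) ga(3) by blast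
      then obtain y where y: "y \<in> A'" "a' = y ^ m" unfolding pows_def by blast
      have yp: "0 < y" using y(1) A'A Apos by blast
      have "a = y" using power_eq_imp_eq_base[of a m y] am y(2) ap yp m(1) by simp
      then show "a \<in> A'" using y(1) by simp
    qed
  qed
  have equiv: "(\<forall>k\<in>K'. 0 < k \<longrightarrow> (\<exists>a\<in>A'. a \<le> k \<and> k < a * dp \<epsilon>))
        \<longleftrightarrow> (\<forall>k\<in>K'. 0 < k \<longrightarrow> lam A (dp \<epsilon>) k \<in> K')"
  proof
    assume H: "\<forall>k\<in>K'. 0 < k \<longrightarrow> (\<exists>a\<in>A'. a \<le> k \<and> k < a * dp \<epsilon>)"
    show "\<forall>k\<in>K'. 0 < k \<longrightarrow> lam A (dp \<epsilon>) k \<in> K'"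
    proof (intro ballI impI)
      fix k assume "k \<in> K'" "0 < k"
      then obtain a where a: "a \<in> A'" "a \<le> k" "k < a * dp \<epsilon>" using H by blast
      have "a \<in> A" using a(1) A'A by blast
      then have "lam A (dp \<epsilon>) k = a" using lam_eq[OF Ag Apos emin _ a(2,3)] by blast
      then show "lam A (dp \<epsilon>) k \<in> K'" using a(1) A'_K' by auto
    qed
  next
    assume H: "\<forall>k\<in>K'. 0 < k \<longrightarrow> lam A (dp \<epsilon>) k \<in> K'"
    show "\<forall>k\<in>K'. 0 < k \<longrightarrow> (\<exists>a\<in>A'. a \<le> k \<and> k < a * dp \<epsilon>)"
    proof (intro ballI impI)
      fix k assume k: "k \<in> K'" "0 < k"
      then obtain a where a: "a \<in> A" "a \<le> k" "k < a * dp \<epsilon>" using disc by blast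
      have "lam A (dp \<epsilon>) k = a" by (rule lam_eq[OF Ag Apos emin a])
      then have "a \<in> K'" using H k by auto
      then have "a \<in> A'" using Apart a(1) by blast
      then show "\<exists>a\<in>A'. a \<le> k \<and> k < a * dp \<epsilon>" using a by blast
    qed
  qed
  show ?thesis using Gpart Apart equiv by blast
qed

end
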